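(* Let $M\in\mathrm{M}_n(\mathbb{K})$ with minimal polynomial $\mu_M=f_1^{m_1}\cdots f_s^{m_s}$, where $f_1,\dots,f_s\in\mathbb{K}[x]$ are pairwise distinct monic irreducible polynomials and $m_i\ge 1$, and let $\mathcal{C}\subseteq\mathbb{L}^n$ be an $M$-code of dimension $k$. Let $\Gamma=\{i\in\{1,\dots,s\} : \ker(f_i^{m_i}(M))\subseteq\mathcal{C}\}$ (kernel in $\mathbb{L}^n$) and $d_\Gamma=\sum_{i\in\Gamma}\dim_{\mathbb{K}}\ker(f_i^{m_i}(M))$. Then $M_r(\mathcal{C})=r$ for all $r\in\{1,\dots,d_\Gamma\}$.
   Context: Let $\mathbb{L}/\mathbb{K}$ be a field extension of finite degree $m$, and $n\ge 1$ an integer with $m\ge n$ (standing assumption). Vectors are row vectors; for a matrix $A$ with entries in $\mathbb{K}$, $\ker(A)$ denotes $\{c : cA^t=0\}$ in $\mathbb{K}^n$ or in $\mathbb{L}^n$. Fix a $\mathbb{K}$-basis $\mathcal{B}$ of $\mathbb{L}$; for $c=(c_1,\dots,c_n)\in\mathbb{L}^n$ let $M_{\mathcal{B}}(c)\in\mathrm{M}_{m\times n}(\mathbb{K})$ be the matrix whose $j$-th column is the coordinate vector of $c_j$ in $\mathcal{B}$. The rank support $\mathrm{Rsupp}(c)\subseteq\mathbb{K}^n$ is the $\mathbb{K}$-row space of $M_{\mathcal{B}}(c)$, and $\mathrm{wt}_R(c)=\dim_{\mathbb{K}}\mathrm{Rsupp}(c)$. For an $\mathbb{L}$-subspace $\mathcal{D}\subseteq\mathbb{L}^n$,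 $\mathrm{Rsupp}(\mathcal{D})$ is the $\mathbb{K}$-span of all $\mathrm{Rsupp}(d)$, $d\in\mathcal{D}$, and $\mathrm{wt}_R(\mathcal{D})=\dim_{\mathbb{K}}\mathrm{Rsupp}(\mathcal{D})$. A linear $[n,k]$ code is a $k$-dimensional $\mathbb{L}$-subspace $\mathcal{C}\subseteq\mathbb{L}^n$; for $1\le r\le k$, $M_r(\mathcal{C})=\min\{\mathrm{wt}_R(\mathcal{D}) : \mathcal{D}\subseteq\mathcal{C},\ \dim_{\mathbb{L}}\mathcal{D}=r\}$. For $M\in\mathrm{M}_n(\mathbb{K})$, a linear code $\mathcal{C}\subseteq\mathbb{L}^n$ is an $M$-code if $cM^t\in\mathcal{C}$ for all $c\in\mathcal{C}$. *)

theory Defs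
  imports "HOL-Analysis.Analysis" "HOL-Computational_Algebra.Polynomial" "HOL-Computational_Algebra.Factorial_Ring"
begin

text \<open>The field extension L/K is given by a field embedding emb : K -> L
  (K and L are field types 'k and 'l).\<close>
definition field_emb :: "('k::field \<Rightarrow> 'l::field) \<Rightarrow> bool" where
  "field_emb emb \<longleftrightarrow> emb 1 = 1 \<and> (\<forall>a b. emb (a + b) = emb a + emb b) \<and> (\<forall>a b. emb (a * b) = emb a * emb b)"

text \<open>A K-basis of L indexed by the finite type 'm (so m = CARD('m)):
  every element of L has a unique coordinate vector.\<close>
definition is_K_basis :: "('k::field \<Rightarrow> 'l::field) \<Rightarrow> ('m::finite \<Rightarrow> 'l) \<Rightarrow> bool" where
  "is_K_basis emb B \<longleftrightarrow> (\<forall>x. \<exists>!a::'k^'m. x = (\<Sum>i\<in>UNIV. emb (a $ i) * B i))"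

definition coords :: "('k::field \<Rightarrow> 'l::field) \<Rightarrow> ('m::finite \<Rightarrow> 'l) \<Rightarrow> 'l \<Rightarrow> 'k^'m" where
  "coords emb B x = (THE a. x = (\<Sum>i\<in>UNIV. emb (a $ i) * B i))"

definition MB :: "('k::field \<Rightarrow> 'l::field) \<Rightarrow> ('m::finite \<Rightarrow> 'l) \<Rightarrow> 'l^'n \<Rightarrow> 'k^'n^'m" where
  "MB emb B c = (\<chi> i j. coords emb B (c $ j) $ i)"

definition Rsupp :: "('k::field \<Rightarrow> 'l::field) \<Rightarrow> ('m::finite \<Rightarrow> 'l) \<Rightarrow> 'l^'n \<Rightarrow> ('k^'n) set" where
  "Rsupp emb B c = vec.span {MB emb B c $ i | i. True}"

definition wtR :: "('k::field \<Rightarrow> 'l::field) \<Rightarrow> ('m::finite \<Rightarrow> 'l) \<Rightarrow> 'l^'n \<Rightarrow> nat" where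
  "wtR emb B c = vec.dim (Rsupp emb B c)"

definition Rsupp_sp :: "('k::field \<Rightarrow> 'l::field) \<Rightarrow> ('m::finite \<Rightarrow> 'l) \<Rightarrow> ('l^'n) set \<Rightarrow> ('k^'n) set" where
  "Rsupp_sp emb B D = vec.span (\<Union>d\<in>D. Rsupp emb B d)"

definition wtR_sp :: "('k::field \<Rightarrow> 'l::field) \<Rightarrow> ('m::finite \<Rightarrow> 'l) \<Rightarrow> ('l^'n) set \<Rightarrow> nat" where
  "wtR_sp emb B D = vec.dim (Rsupp_sp emb B D)"

definition Mr :: "('k::field \<Rightarrow> 'l::field) \<Rightarrow> ('m::finite \<Rightarrow> 'l) \<Rightarrow> nat \<Rightarrow> ('l^'n) set \<Rightarrow> nat" where
  "Mr emb B r C = Min {wtR_sp emb B D | D. vec.subspace D \<and> D \<subseteq> C \<and> vec.dim D = r}"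

definition emb_mat :: "('k::field \<Rightarrow> 'l::field) \<Rightarrow> 'k^'n^'n \<Rightarrow> 'l^'n^'n" where
  "emb_mat emb A = (\<chi> i j. emb (A $ i $ j))"

definition kerK :: "'k::field^'n^'n \<Rightarrow> ('k^'n) set" where
  "kerK A = {c. c v* transpose A = 0}"

definition kerL :: "('k::field \<Rightarrow> 'l::field) \<Rightarrow> 'k^'n^'n \<Rightarrow> ('l^'n) set" where
  "kerL emb A = {c. c v* transpose (emb_mat emb A) = 0}"

definition is_M_code :: "('k::field \<Rightarrow> 'l::field) \<Rightarrow> 'k^'n^'n \<Rightarrow> ('l^'n) set \<Rightarrow> bool" where
  "is_M_code emb M C \<longleftrightarrow> vec.subspace C \<and> (\<forall>c\<in>C. c v* transpose (emb_mat emb M) \<in> C)"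

definition mat_pow :: "'a::semiring_1^'n^'n \<Rightarrow> nat \<Rightarrow> 'a^'n^'n" where
  "mat_pow A i = ((\<lambda>X. X ** A) ^^ i) (mat 1)"

definition poly_mat :: "'a::comm_ring_1 poly \<Rightarrow> 'a^'n^'n \<Rightarrow> 'a^'n^'n" where
  "poly_mat p A = (\<Sum>i\<le>degree p. mat (coeff p i) ** mat_pow A i)"

definition min_poly :: "'a::field^'n^'n \<Rightarrow> 'a poly" where
  "min_poly A = (THE p. lead_coeff p = 1 \<and> poly_mat p A = 0 \<and>
      (\<forall>q. q \<noteq> 0 \<and> poly_mat q A = 0 \<longrightarrow> degree p \<le> degree q))"

end

theory Submission
  imports Defs
begin


lemma mat_pow_0: "mat_pow A 0 = mat 1" by (simp add: mat_pow_def)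
lemma mat_pow_Suc: "mat_pow A (Suc i) = mat_pow A i ** A" by (simp add: mat_pow_def)
lemma mat_pow_Suc': "mat_pow A (Suc i) = A ** (mat_pow A i :: 'a::semiring_1^'n^'n)"
  by (induction i) (simp_all add: mat_pow_Suc mat_pow_0, metis matrix_mul_assoc)

lemma mat_vec: "mat c *v y = c *s (y::'a::field^'n)"
  by (simp add: mat_def matrix_vector_mult_def vec_eq_iff if_distrib if_distribR cong: if_cong)

lemma matrix_vector_mult_sum: "(sum F S) *v (x::'a::field^'n) = (\<Sum>i\<in>S. F i *v x)"
  by (induct S rule: infinite_finite_induct) (simp_all add: matrix_vector_mult_add_rdistrib)

lemma mat_mul_vec: "(mat c ** X) *v x = c *s (X *v (x::'a::field^'n))"
  by (simp add: matrix_vector_mul_assoc[symmetric] mat_vec)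

lemma poly_mat_vec_N:
  fixes A :: "'a::field^'n^'n"
  assumes "degree p \<le> N"
  shows "poly_mat p A *v x = (\<Sum>i\<le>N. coeff p i *s (mat_pow A i *v x))"
proof -
  have "poly_mat p A *v x = (\<Sum>i\<le>degree p. coeff p i *s (mat_pow A i *v x))"
    unfolding poly_mat_def by (simp add: matrix_vector_mult_sum mat_mul_vec)
  also have "\<dots> = (\<Sum>i\<le>N. coeff p i *s (mat_pow A i *v x))"
    by (rule sum.mono_neutral_left) (use assms in \<open>auto simp: coeff_eq_0\<close>)
  finally show ?thesis .
qed

lemma poly_mat_add:
  fixes A :: "'a::field^'n^'n"
  shows "poly_mat (p + q) A *v x = poly_mat p A *v x + poly_mat q A *v x"
proof -
  let ?N = "max (degree p) (degree q)"
  have "degree (p+q) \<le> ?N" by (rule degree_add_le) auto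
  then show ?thesis
    by (simp add: poly_mat_vec_N[of p ?N] poly_mat_vec_N[of q ?N] poly_mat_vec_N[of "p+q" ?N]
        sum.distrib[symmetric] vec.scale_left_distrib)
qed

lemma poly_mat_smult:
  fixes A :: "'a::field^'n^'n"
  shows "poly_mat (smult a p) A *v x = a *s (poly_mat p A *v x)"
  by (simp add: poly_mat_vec_N[of p "degree p"] poly_mat_vec_N[of "smult a p" "degree p"]
        vec.scale_sum_right)

lemma poly_mat_pCons:
  fixes A :: "'a::field^'n^'n"
  shows "poly_mat (pCons a p) A *v x = a *s x + A *v (poly_mat p A *v x)"
proof -
  let ?N = "Suc (degree p)"
  have "degree (pCons a p) \<le> ?N" by (simp add: degree_pCons_le)
  then have "poly_mat (pCons a p) A *v x = (\<Sum>i\<le>?N. coeff (pCons a p) i *s (mat_pow A i *v x))"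
    by (rule poly_mat_vec_N)
  also have "\<dots> = a *s x + (\<Sum>i\<le>degree p. coeff p i *s (mat_pow A (Suc i) *v x))"
    by (simp add: sum.atMost_Suc_shift mat_pow_0 del: sum.atMost_Suc)
  also have "\<dots> = a *s x + A *v (poly_mat p A *v x)"
    by (simp add: poly_mat_vec_N[of p "degree p"] vec.sum vec.scale mat_pow_Suc'
        matrix_vector_mul_assoc[symmetric])
  finally show ?thesis .
qed

lemma poly_mat_0: "poly_mat 0 (A::'a::field^'n^'n) *v x = 0"
  by (simp add: poly_mat_vec_N[of 0 0])

lemma poly_mat_1: "poly_mat 1 (A::'a::field^'n^'n) *v x = x"
  by (simp add: poly_mat_vec_N[of 1 0] mat_pow_0)

lemma poly_mat_mult:
  fixes A :: "'a::field^'n^'n"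
  shows "poly_mat (p * q) A *v x = poly_mat p A *v (poly_mat q A *v x)"
proof (induction p)
  case 0
  then show ?case by (simp add: poly_mat_0)
next
  case (pCons a p)
  have "pCons a p * q = smult a q + pCons 0 (p * q)" by simp
  then show ?case
    by (simp only: poly_mat_add poly_mat_smult poly_mat_pCons pCons.IH) simp
qed



definition emb_vec :: "('k::field \<Rightarrow> 'l::field) \<Rightarrow> 'k^'n \<Rightarrow> 'l^'n" where
  "emb_vec emb v = (\<chi> j. emb (v $ j))"

locale kb =
  fixes emb :: "'k::field \<Rightarrow> 'l::field" and B :: "'m::finite \<Rightarrow> 'l"
  assumes fe: "field_emb emb" and kbas: "is_K_basis emb B"
begin

lemma emb_1: "emb 1 = 1" and emb_add: "emb (a + b) = emb a + emb b"
  and emb_mult: "emb (a * b) = emb a * emb b"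
  using fe by (auto simp: field_emb_def)

lemma emb_0[simp]: "emb 0 = 0"
proof -
  have "emb 0 + emb 0 = emb 0 + 0" using emb_add[of 0 0] by simp
  then show ?thesis by (rule add_left_cancel[THEN iffD1])
qed

lemma emb_uminus: "emb (- a) = - emb a"
  using emb_add[of a "-a"] by (simp add: eq_neg_iff_add_eq_0 add.commute)

lemma emb_diff: "emb (a - b) = emb a - emb b"
  using emb_add[of a "-b"] by (simp add: emb_uminus)

lemma emb_sum: "emb (sum g S) = (\<Sum>i\<in>S. emb (g i))"
  by (induct S rule: infinite_finite_induct) (simp_all add: emb_add)

lemma emb_eq_0: "emb a = 0 \<longleftrightarrow> a = 0"
proof
  assume "emb a = 0"
  show "a = 0"
  proof (rule ccontr)
    assume "a \<noteq> 0"
    then have "emb 1 = emb a * emb (inverse a)" by (simp add: emb_mult[symmetric])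
    then show False using \<open>emb a = 0\<close> emb_1 by simp
  qed
qed simp

lemma emb_inj: "emb a = emb b \<longleftrightarrow> a = b"
  using emb_eq_0[of "a - b"] by (simp add: emb_diff)

lemma coords_repr: "x = (\<Sum>i\<in>UNIV. emb (coords emb B x $ i) * B i)"
proof -
  have "\<exists>!a::'k^'m. x = (\<Sum>i\<in>UNIV. emb (a $ i) * B i)" using kbas by (simp add: is_K_basis_def)
  then show ?thesis unfolding coords_def by (rule theI')
qed

lemma coords_unique:
  assumes "x = (\<Sum>i\<in>UNIV. emb (a $ i) * B i)"
  shows "coords emb B x = a"
proof -
  have "\<exists>!a::'k^'m. x = (\<Sum>i\<in>UNIV. emb (a $ i) * B i)" using kbas by (simp add: is_K_basis_def)
  then show ?thesis using assms coords_repr[of x] by blast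
qed

lemma coords_add: "coords emb B (x + y) = coords emb B x + coords emb B y"
  by (rule coords_unique)
     (subst coords_repr[of x], subst coords_repr[of y], simp add: emb_add sum.distrib algebra_simps)

lemma coords_scale: "coords emb B (emb a * x) = a *s coords emb B x"
  by (rule coords_unique)
     (subst coords_repr[of x], simp add: emb_mult sum_distrib_left algebra_simps)

lemma coords_0[simp]: "coords emb B 0 = 0"
  by (rule coords_unique) simp

lemma coords_eq_0: "coords emb B x = 0 \<Longrightarrow> x = 0"
  using coords_repr[of x] by simp

lemma coords_sum: "coords emb B (sum g S) = (\<Sum>i\<in>S. coords emb B (g i))"
  by (induct S rule: infinite_finite_induct) (simp_all add: coords_add)

lemma emb_vec_0[simp]: "emb_vec emb 0 = 0"
  by (simp add: emb_vec_def vec_eq_iff)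

lemma emb_vec_add: "emb_vec emb (x + y) = emb_vec emb x + emb_vec emb y"
  by (simp add: emb_vec_def vec_eq_iff emb_add)

lemma emb_vec_scale: "emb_vec emb (a *s x) = emb a *s emb_vec emb x"
  by (simp add: emb_vec_def vec_eq_iff emb_mult)

lemma emb_vec_inj: "inj (emb_vec emb :: 'k^'n \<Rightarrow> 'l^'n)"
  by (rule injI) (simp add: emb_vec_def vec_eq_iff emb_inj)

lemma emb_mat_mult: "emb_mat emb P *v emb_vec emb v = emb_vec emb (P *v v)"
  by (simp add: emb_mat_def emb_vec_def matrix_vector_mult_def vec_eq_iff emb_sum emb_mult)

lemma emb_vec_span:
  assumes "x \<in> vec.span S"
  shows "emb_vec emb x \<in> vec.span (emb_vec emb ` S)"
  using assms
proof (induction rule: vec.span_induct_alt)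
  case base
  then show ?case by (simp add: vec.span_zero)
next
  case (step c x y)
  then show ?case
    by (simp add: emb_vec_add emb_vec_scale vec.span_add vec.span_scale vec.span_base)
qed

lemma MB_repr: "d = (\<Sum>i\<in>UNIV. B i *s emb_vec emb (MB emb B d $ i))"
proof -
  have "d $ j = (\<Sum>i\<in>UNIV. B i *s emb_vec emb (MB emb B d $ i)) $ j" for j
    by (subst coords_repr[of "d $ j"]) (simp add: MB_def emb_vec_def sum_component mult.commute)
  then show ?thesis by (simp add: vec_eq_iff)
qed

lemma MB_row_span:
  assumes "d \<in> vec.span (emb_vec emb ` S)"
  shows "MB emb B d $ i \<in> vec.span S"
  using assms
proof (induction rule: vec.span_induct_alt)
  case base
  show ?case unfolding MB_def using vec.span_zero[of S] by (simp add: zero_vec_def)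
next
  case (step c x y)
  then obtain v where v: "v \<in> S" "x = emb_vec emb v" by auto
  have "MB emb B (c *s x + y) $ i = (coords emb B c $ i) *s v + MB emb B y $ i"
    by (simp add: v MB_def emb_vec_def vec_eq_iff coords_add mult.commute[of c] coords_scale)
  then show ?case using step v by (simp add: vec.span_add vec.span_scale vec.span_base)
qed

lemma emb_vec_indep:
  fixes S :: "('k^'n) set"
  assumes ind: "vec.independent S"
  shows "vec.independent (emb_vec emb ` S)"
proof -
  have fin: "finite S" using ind vec.independent_explicit by blast
  have indS: "\<And>u. (\<Sum>v\<in>S. u v *s v) = 0 \<Longrightarrow> (\<forall>v\<in>S. u v = 0)"
    using ind vec.independent_explicit by blast
  have inj: "inj_on (emb_vec emb) S" using emb_vec_inj by (rule inj_on_subset) simp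
  show ?thesis unfolding vec.independent_explicit
  proof (intro conjI allI impI)
    show "finite (emb_vec emb ` S)" using fin by simp
    fix c :: "'l^'n \<Rightarrow> 'l"
    assume "(\<Sum>w\<in>emb_vec emb ` S. c w *s w) = 0"
    then have s0: "(\<Sum>v\<in>S. c (emb_vec emb v) *s emb_vec emb v) = 0"
      by (simp add: sum.reindex[OF inj])
    define lam where "lam v = c (emb_vec emb v)" for v
    have z: "(\<Sum>v\<in>S. coords emb B (lam v) $ i *s v) = 0" for i
    proof -
      have "(\<Sum>v\<in>S. coords emb B (lam v) $ i *s v) $ j = 0" for j
      proof -
        have "(\<Sum>v\<in>S. lam v * emb (v $ j)) = 0"
          using arg_cong[OF s0, of "\<lambda>x. x $ j"] by (simp add: lam_def emb_vec_def sum_component)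
        then have "coords emb B (\<Sum>v\<in>S. emb (v $ j) * lam v) = 0" by (simp add: mult.commute)
        then have "(\<Sum>v\<in>S. (v $ j) *s coords emb B (lam v)) = 0"
          by (simp add: coords_sum coords_scale)
        then have "(\<Sum>v\<in>S. (v $ j) *s coords emb B (lam v)) $ i = 0" by simp
        then show ?thesis by (simp add: sum_component mult.commute)
      qed
      then show ?thesis by (simp add: vec_eq_iff)
    qed
    have "\<forall>v\<in>S. coords emb B (lam v) $ i = 0" for i using indS[OF z[of i]] .
    have "lam v = 0" if "v \<in> S" for v
    proof (rule coords_eq_0)
      show "coords emb B (lam v) = 0"
        unfolding vec_eq_iff using that \<open>\<And>i. \<forall>v\<in>S. coords emb B (lam v) $ i = 0\<close> by simp
    qed
    then show "\<forall>w\<in>emb_vec emb ` S. c w = 0" unfolding lam_def by blast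
  qed
qed

lemma wtR_sp_lower:
  fixes D :: "('l^'n) set"
  shows "vec.dim D \<le> wtR_sp emb B D"
proof -
  define R where "R = Rsupp_sp emb B D"
  obtain \<beta> where b: "\<beta> \<subseteq> R" "vec.independent \<beta>" "R \<subseteq> vec.span \<beta>" "card \<beta> = vec.dim R"
    by (rule vec.basis_exists)
  have fin: "finite \<beta>" using b(2) vec.independent_explicit by blast
  have "D \<subseteq> vec.span (emb_vec emb ` \<beta>)"
  proof
    fix d assume "d \<in> D"
    have "MB emb B d $ i \<in> R" for i
      unfolding R_def Rsupp_sp_def Rsupp_def
    proof (rule vec.span_base, rule UN_I[OF \<open>d \<in> D\<close>], rule vec.span_base)
      show "MB emb B d $ i \<in> {MB emb B d $ i |i. True}" by blast
    qed
    then have "emb_vec emb (MB emb B d $ i) \<in> vec.span (emb_vec emb ` \<beta>)" for i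
    proof -
      have "MB emb B d $ i \<in> vec.span \<beta>" using b(3) \<open>MB emb B d $ i \<in> R\<close> by (rule subsetD)
      then show ?thesis by (rule emb_vec_span)
    qed
    then have "(\<Sum>i\<in>UNIV. B i *s emb_vec emb (MB emb B d $ i)) \<in> vec.span (emb_vec emb ` \<beta>)"
      by (intro vec.span_sum vec.span_scale)
    then show "d \<in> vec.span (emb_vec emb ` \<beta>)" by (simp only: MB_repr[of d, symmetric])
  qed
  then have "vec.dim D \<le> card (emb_vec emb ` \<beta>)" by (rule vec.dim_le_card[OF _ finite_imageI[OF fin]])
  also have "\<dots> \<le> card \<beta>" using fin by (rule card_image_le)
  finally show ?thesis using b(4) by (simp add: wtR_sp_def R_def)
qed

lemma upper_witness:
  fixes S :: "('k^'n) set"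
  assumes ind: "vec.independent S"
  defines "D \<equiv> vec.span (emb_vec emb ` S)"
  shows "vec.subspace D" "vec.dim D = card S" "wtR_sp emb B D \<le> card S"
proof -
  have inj: "inj_on (emb_vec emb) S" using emb_vec_inj by (rule inj_on_subset) simp
  show "vec.subspace D" unfolding D_def by (rule vec.subspace_span)
  show "vec.dim D = card S" unfolding D_def
    using vec.dim_span_eq_card_independent[OF emb_vec_indep[OF ind]] card_image[OF inj] by simp
  have "Rsupp_sp emb B D \<subseteq> vec.span S"
    unfolding Rsupp_sp_def
  proof (rule vec.span_minimal[OF _ vec.subspace_span], rule UN_least)
    fix d assume "d \<in> D"
    have "d \<in> vec.span (emb_vec emb ` S)" using \<open>d \<in> D\<close> unfolding D_def .
    have "{MB emb B d $ i |i. True} \<subseteq> vec.span S"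
    proof
      fix x assume "x \<in> {MB emb B d $ i |i. True}"
      then obtain i where "x = MB emb B d $ i" by blast
      then show "x \<in> vec.span S" using MB_row_span[OF \<open>d \<in> vec.span (emb_vec emb ` S)\<close>] by simp
    qed
    then show "Rsupp emb B d \<subseteq> vec.span S" unfolding Rsupp_def
      by (rule vec.span_minimal[OF _ vec.subspace_span])
  qed
  then have "wtR_sp emb B D \<le> vec.dim (vec.span S)" unfolding wtR_sp_def by (rule vec.dim_subset)
  then show "wtR_sp emb B D \<le> card S" using vec.dim_span_eq_card_independent[OF ind] by simp
qed

end


definition bzp :: "'a::comm_ring_1 \<Rightarrow> 'a \<Rightarrow> bool" where
  "bzp p q \<longleftrightarrow> (\<exists>u v. u * p + v * q = 1)"

lemma bzp_sym: "bzp p q \<Longrightarrow> bzp q p"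
  unfolding bzp_def by (metis add.commute)

lemma bzp_mult: assumes "bzp a c" "bzp b c" shows "bzp (a * b) c"
proof -
  obtain u1 v1 where 1: "u1 * a + v1 * c = 1" using assms(1) bzp_def by blast
  obtain u2 v2 where 2: "u2 * b + v2 * c = 1" using assms(2) bzp_def by blast
  have "(u1 * u2) * (a * b) + (u1 * a * v2 + v1 * (u2 * b + v2 * c)) * c
      = (u1 * a + v1 * c) * (u2 * b + v2 * c)" by (simp add: algebra_simps)
  also have "\<dots> = 1" using 1 2 by simp
  finally show ?thesis unfolding bzp_def by blast
qed

lemma bzp_one: "bzp 1 c" unfolding bzp_def by (rule exI[of _ 1], rule exI[of _ 0]) simp

lemma bzp_power: "bzp a c \<Longrightarrow> bzp (a ^ n) c"
  by (induction n) (simp_all add: bzp_one bzp_mult)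

lemma bzp_prod: "(\<And>i. i \<in> G \<Longrightarrow> bzp (g i) c) \<Longrightarrow> bzp (prod g G) c"
  by (induction G rule: infinite_finite_induct) (simp_all add: bzp_one bzp_mult)

lemma euclid_bzp:
  fixes p q :: "'a::field poly"
  assumes "coprime p q"
  shows "bzp p q"
  using assms
proof (induction "euclidean_size q" arbitrary: p q rule: less_induct)
  case less
  show ?case
  proof (cases "q = 0")
    case True
    then have "is_unit p" using less.prems by simp
    then obtain w where "1 = p * w" by (auto elim: dvdE)
    then have "w * p + 0 * q = 1" by (simp add: mult.commute)
    then show ?thesis unfolding bzp_def by blast
  next
    case False
    have "coprime q (p mod q)" using coprime_mod_right_iff[OF False] less.prems
      by (simp add: coprime_commute)
    from less.hyps[OF mod_size_less[OF False] this]
    obtain u v where uv: "u * q + v * (p mod q) = 1" unfolding bzp_def by blast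
    have "p mod q = p - (p div q) * q" by (simp add: minus_div_mult_eq_mod)
    with uv have "v * p + (u - v * (p div q)) * q = 1" by (simp add: algebra_simps)
    then show ?thesis unfolding bzp_def by blast
  qed
qed

lemma monic_irreducible_bzp:
  fixes f g :: "'a::field poly"
  assumes "lead_coeff f = 1" "lead_coeff g = 1" "irreducible f" "irreducible g" "f \<noteq> g"
  shows "bzp f g"
proof (rule euclid_bzp, rule coprimeI)
  fix d assume df: "d dvd f" and dg: "d dvd g"
  show "is_unit d"
  proof (rule ccontr)
    assume nu: "\<not> is_unit d"
    obtain e where fe: "f = d * e" using df by (auto elim: dvdE)
    have "is_unit e" using irreducibleD[OF assms(3) fe] nu by blast
    then have "f dvd d" by (simp add: fe mult_unit_dvd_iff)
    then have "f dvd g" using dg by (rule dvd_trans)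
    then obtain h where gh: "g = f * h" by (auto elim: dvdE)
    have "\<not> is_unit f" using assms(3) by (rule irreducible_not_unit)
    then have uh: "is_unit h" using irreducibleD[OF assms(4) gh] by blast
    then have h0: "h \<noteq> 0" by auto
    have dh: "degree h = 0" using uh h0 by (simp add: is_unit_iff_degree)
    have "lead_coeff g = lead_coeff f * lead_coeff h" using gh by (simp add: lead_coeff_mult)
    then have lh: "lead_coeff h = 1" using assms(1,2) by simp
    obtain c where hc: "h = [:c:]" using dh by (rule degree_eq_zeroE)
    then have "h = 1" using lh by (simp add: one_pCons)
    then show False using gh assms(5) by simp
  qed
qed

lemma kerK_eq: "kerK P = {c. P *v c = 0}" by (simp add: kerK_def)

lemma ker_inter_trivial:
  fixes A :: "'a::field^'n^'n" and g :: "nat \<Rightarrow> 'a poly"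
  assumes fin: "finite G" and cop: "\<And>i. i \<in> G \<Longrightarrow> bzp (g i) (g j)"
    and y1: "y \<in> kerK (poly_mat (g j) A)"
    and y2: "y \<in> vec.span (\<Union>i\<in>G. kerK (poly_mat (g i) A))"
  shows "y = 0"
proof -
  define Q where "Q = prod g G"
  have "(\<Union>i\<in>G. kerK (poly_mat (g i) A)) \<subseteq> {x. poly_mat Q A *v x = 0}"
  proof (rule UN_least)
    fix i assume "i \<in> G"
    then have "Q = prod g (G - {i}) * g i" unfolding Q_def
      using prod.remove[OF fin \<open>i \<in> G\<close>, of g] by (simp add: mult.commute)
    then show "kerK (poly_mat (g i) A) \<subseteq> {x. poly_mat Q A *v x = 0}"
      by (auto simp: kerK_eq poly_mat_mult)
  qed
  then have "vec.span (\<Union>i\<in>G. kerK (poly_mat (g i) A)) \<subseteq> {x. poly_mat Q A *v x = 0}"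
    by (rule vec.span_minimal[OF _ vec.subspace_kernel])
  then have yQ: "poly_mat Q A *v y = 0" using y2 by blast
  have "bzp Q (g j)" unfolding Q_def by (rule bzp_prod) (rule cop)
  then obtain u v where bz: "u * Q + v * g j = 1" unfolding bzp_def by blast
  have yj: "poly_mat (g j) A *v y = 0" using y1 by (simp add: kerK_eq)
  have "y = poly_mat 1 A *v y" by (simp add: poly_mat_1)
  also have "\<dots> = 0" unfolding bz[symmetric]
    by (simp add: poly_mat_add poly_mat_mult yj yQ)
  finally show ?thesis .
qed

lemma ker_sum_dim:
  fixes A :: "'a::field^'n^'n" and g :: "nat \<Rightarrow> 'a poly"
  assumes "finite G" "\<And>i j. i \<in> G \<Longrightarrow> j \<in> G \<Longrightarrow> i \<noteq> j \<Longrightarrow> bzp (g i) (g j)"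
  shows "vec.dim (vec.span (\<Union>i\<in>G. kerK (poly_mat (g i) A))) = (\<Sum>i\<in>G. vec.dim (kerK (poly_mat (g i) A)))"
  using assms
proof (induction G rule: finite_induct)
  case empty
  then show ?case by simp
next
  case (insert j G)
  define K where "K = kerK (poly_mat (g j) A)"
  define T where "T = vec.span (\<Union>i\<in>G. kerK (poly_mat (g i) A))"
  have IH: "vec.dim T = (\<Sum>i\<in>G. vec.dim (kerK (poly_mat (g i) A)))"
    unfolding T_def using insert by auto
  have sK: "vec.subspace K" unfolding K_def kerK_eq by (rule vec.subspace_kernel)
  have sT: "vec.subspace T" unfolding T_def by (rule vec.subspace_span)
  have "vec.span (\<Union>i\<in>insert j G. kerK (poly_mat (g i) A)) = vec.span (K \<union> (\<Union>i\<in>G. kerK (poly_mat (g i) A)))"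
    by (simp add: K_def)
  also have "\<dots> = {x + y |x y. x \<in> K \<and> y \<in> T}"
  proof -
    have spK: "vec.span K = K" using sK vec.span_eq_iff by blast
    show ?thesis unfolding vec.span_Un spK T_def ..
  qed
  finally have eq: "vec.span (\<Union>i\<in>insert j G. kerK (poly_mat (g i) A)) = {x + y |x y. x \<in> K \<and> y \<in> T}" .
  have "K \<inter> T \<subseteq> {0}"
  proof
    fix y assume y: "y \<in> K \<inter> T"
    have "y = 0"
    proof (rule ker_inter_trivial[of G g j y A])
      show "finite G" by fact
      show "bzp (g i) (g j)" if "i \<in> G" for i using insert that by auto
    qed (use y K_def T_def in auto)
    then show "y \<in> {0}" by simp
  qed
  then have "K \<inter> T \<subseteq> vec.span {}" by (simp add: vec.span_empty)
  then have "vec.dim (K \<inter> T) \<le> card ({}::('a^'n) set)" by (rule vec.dim_le_card) simp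
  then have d0: "vec.dim (K \<inter> T) = 0" by simp
  have "vec.dim {x + y |x y. x \<in> K \<and> y \<in> T} = vec.dim K + vec.dim T"
    using vec.dim_sums_Int[OF sK sT] d0 by simp
  then have "vec.dim (vec.span (\<Union>i\<in>insert j G. kerK (poly_mat (g i) A))) = vec.dim K + vec.dim T"
    using eq by simp
  then show ?case using IH insert(1,2) by (simp add: K_def)
qed


theorem corollary3:
  fixes emb :: "'k::field \<Rightarrow> 'l::field"
    and B :: "'m::finite \<Rightarrow> 'l"
    and M :: "'k^'n::finite^'n"
    and C :: "('l^'n) set"
    and k s :: nat and f :: "nat \<Rightarrow> 'k poly" and mm :: "nat \<Rightarrow> nat"
  assumes "field_emb emb"
    and "is_K_basis emb B"
    and "CARD('n) \<le> CARD('m)"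
    and "min_poly M = (\<Prod>i\<in>{1..s}. f i ^ mm i)"
    and "inj_on f {1..s}"
    and "\<forall>i\<in>{1..s}. lead_coeff (f i) = 1 \<and> irreducible (f i) \<and> mm i \<ge> 1"
    and "is_M_code emb M C"
    and "vec.dim C = k"
  shows "\<forall>r\<in>{1..(\<Sum>i\<in>{i\<in>{1..s}. kerL emb (poly_mat (f i ^ mm i) M) \<subseteq> C}.
                       vec.dim (kerK (poly_mat (f i ^ mm i) M)))}.
           Mr emb B r C = r"
proof
  interpret kb emb B using assms(1,2) by unfold_locales
  define g where "g i = f i ^ mm i" for i
  define G where "G = {i\<in>{1..s}. kerL emb (poly_mat (g i) M) \<subseteq> C}"
  fix r assume "r \<in> {1..(\<Sum>i\<in>{i\<in>{1..s}. kerL emb (poly_mat (f i ^ mm i) M) \<subseteq> C}.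
                       vec.dim (kerK (poly_mat (f i ^ mm i) M)))}"
  then have r: "r \<le> (\<Sum>i\<in>G. vec.dim (kerK (poly_mat (g i) M)))" by (simp add: G_def g_def)
  have sC: "vec.subspace C" using assms(7) by (simp add: is_M_code_def)
  have finG: "finite G" unfolding G_def by simp
  have bz: "bzp (g i) (g j)" if "i \<in> G" "j \<in> G" "i \<noteq> j" for i j
  proof -
    have ij: "i \<in> {1..s}" "j \<in> {1..s}" using that unfolding G_def by auto
    have "f i \<noteq> f j" using assms(5) ij that(3) by (auto dest: inj_onD)
    then have "bzp (f i) (f j)" using assms(6) ij by (intro monic_irreducible_bzp) auto
    then have "bzp (g i) (f j)" unfolding g_def by (rule bzp_power)
    then have "bzp (f j) (g i)" by (rule bzp_sym)
    then have "bzp (g j) (g i)" unfolding g_def by (rule bzp_power)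
    then show ?thesis by (rule bzp_sym)
  qed
  define U where "U = (\<Union>i\<in>G. kerK (poly_mat (g i) M))"
  have dimW: "vec.dim (vec.span U) = (\<Sum>i\<in>G. vec.dim (kerK (poly_mat (g i) M)))"
    unfolding U_def by (rule ker_sum_dim[OF finG bz])
  obtain \<beta> where b: "\<beta> \<subseteq> vec.span U" "vec.independent \<beta>" "vec.span U \<subseteq> vec.span \<beta>"
      "card \<beta> = vec.dim (vec.span U)"
    by (rule vec.basis_exists)
  have "r \<le> card \<beta>" using r b(4) dimW by simp
  then obtain S where S: "S \<subseteq> \<beta>" "card S = r" by (rule obtain_subset_with_card_n)
  have indS: "vec.independent S" using b(2) S(1) by (rule vec.independent_mono)
  have UC: "emb_vec emb ` U \<subseteq> C"
  proof
    fix x assume "x \<in> emb_vec emb ` U"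
    then obtain i u where iu: "i \<in> G" "u \<in> kerK (poly_mat (g i) M)" "x = emb_vec emb u"
      unfolding U_def by blast
    have "emb_mat emb (poly_mat (g i) M) *v x = 0"
      using iu by (simp add: emb_mat_mult kerK_eq)
    then have "x \<in> kerL emb (poly_mat (g i) M)" by (simp add: kerL_def)
    then show "x \<in> C" using iu(1) unfolding G_def by blast
  qed
  have SC: "emb_vec emb ` S \<subseteq> C"
  proof
    fix x assume "x \<in> emb_vec emb ` S"
    then obtain v where v: "v \<in> S" "x = emb_vec emb v" by blast
    have "v \<in> vec.span U" using v(1) S(1) b(1) by blast
    then have "x \<in> vec.span (emb_vec emb ` U)" using v(2) emb_vec_span by blast
    then show "x \<in> C" using vec.span_minimal[OF UC sC] by blast
  qed
  define D where "D = vec.span (emb_vec emb ` S)"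
  have D1: "vec.subspace D" "vec.dim D = r" "wtR_sp emb B D \<le> r"
    using upper_witness[OF indS] S(2) unfolding D_def by auto
  have DC: "D \<subseteq> C" unfolding D_def by (rule vec.span_minimal[OF SC sC])
  define X where "X = {wtR_sp emb B D | D. vec.subspace D \<and> D \<subseteq> C \<and> vec.dim D = r}"
  have low: "r \<le> y" if "y \<in> X" for y
    using that wtR_sp_lower unfolding X_def by fastforce
  have "wtR_sp emb B D \<in> X" unfolding X_def using D1 DC by blast
  then have rX: "r \<in> X" using low D1(3) by (metis le_antisym)
  have "X \<subseteq> {..CARD('n)}"
    unfolding X_def wtR_sp_def using dim_subset_UNIV_cart_gen by fastforce
  then have "finite X" by (rule finite_subset) simp
  then have "Min X = r" using low rX by (intro Min_eqI) auto
  then show "Mr emb B r C = r" unfolding Mr_def X_def .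
qed

end
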